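(* Let $(X,T)$ be a topological dynamical system and $\mu$ a $T$-invariant Borel probability measure on $X$. Then $\mu$ has bounded complexity with respect to $\{d_n\}$ if and only if $T$ is $\mu$-equicontinuous.
   Context: A t.d.s. $(X,T)$ consists of a compact metric space $(X,d)$ and a continuous map $T\colon X\to X$. $d_n(x,y)=\max\{d(T^ix,T^iy)\colon 0\le i\le n-1\}$, $B_{d_n}(x,\varepsilon)=\{y\colon d_n(x,y)<\varepsilon\}$. For an invariant measure $\mu$, $\mathrm{span}_\mu(n,\varepsilon)=\min\{\#(F)\colon F\subset X,\ \mu(\bigcup_{x\in F}B_{d_n}(x,\varepsilon))>1-\varepsilon\}$; $\mu$ has bounded complexity with respect to $\{d_n\}$ if for every $\varepsilon>0$ there is a positive integer $C$ with $\mathrm{span}_\mu(n,\varepsilon)\le C$ for all $n\ge1$. A subset $K\subset X$ is equicontinuous if for every $\varepsilon>0$ there is $\delta>0$ with $d(T^nx,T^ny)<\varepsilon$ for all $n\ge0$ and all $x,y\in K$ with $d(x,y)<\delta$. $T$ is $\mu$-equicontinuous if for every $\tau>0$ there is an equicontinuous measurable $K\subset X$ with $\mu(K)>1-\tau$. *)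

theory Defs
  imports "HOL-Analysis.Analysis" "HOL-Probability.Probability"
begin

definition tds :: "'a::metric_space set \<Rightarrow> ('a \<Rightarrow> 'a) \<Rightarrow> bool" where
  "tds X T \<longleftrightarrow> compact X \<and> continuous_on X T \<and> T ` X \<subseteq> X"

definition bowen_dist :: "('a::metric_space \<Rightarrow> 'a) \<Rightarrow> nat \<Rightarrow> 'a \<Rightarrow> 'a \<Rightarrow> real" where
  "bowen_dist T n x y = Max (insert 0 {dist ((T ^^ i) x) ((T ^^ i) y) | i. i < n})"

definition bowen_ball :: "'a::metric_space set \<Rightarrow> ('a \<Rightarrow> 'a) \<Rightarrow> nat \<Rightarrow> 'a \<Rightarrow> real \<Rightarrow> 'a set" where
  "bowen_ball X T n x e = {y \<in> X. bowen_dist T n x y < e}"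

definition invariant_borel_prob :: "'a::metric_space set \<Rightarrow> ('a \<Rightarrow> 'a) \<Rightarrow> 'a measure \<Rightarrow> bool" where
  "invariant_borel_prob X T M \<longleftrightarrow> prob_space M \<and> sets M = sets (restrict_space borel X)
     \<and> T \<in> measurable M M \<and> distr M M T = M"

definition span_mu :: "'a::metric_space set \<Rightarrow> ('a \<Rightarrow> 'a) \<Rightarrow> 'a measure \<Rightarrow> nat \<Rightarrow> real \<Rightarrow> nat" where
  "span_mu X T M n e = (LEAST k. \<exists>F. F \<subseteq> X \<and> finite F \<and> card F = k \<and>
      measure M (\<Union>x\<in>F. bowen_ball X T n x e) > 1 - e)"

definition bounded_complexity :: "'a::metric_space set \<Rightarrow> ('a \<Rightarrow> 'a) \<Rightarrow> 'a measure \<Rightarrow> bool" where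
  "bounded_complexity X T M \<longleftrightarrow>
     (\<forall>e>0. \<exists>C::nat. C > 0 \<and> (\<forall>n\<ge>1. span_mu X T M n e \<le> C))"

definition equicontinuous_set :: "('a::metric_space \<Rightarrow> 'a) \<Rightarrow> 'a set \<Rightarrow> bool" where
  "equicontinuous_set T K \<longleftrightarrow>
     (\<forall>e>0. \<exists>d>0. \<forall>n::nat. \<forall>x\<in>K. \<forall>y\<in>K. dist x y < d \<longrightarrow> dist ((T ^^ n) x) ((T ^^ n) y) < e)"

definition mu_equicontinuous :: "('a::metric_space \<Rightarrow> 'a) \<Rightarrow> 'a measure \<Rightarrow> bool" where
  "mu_equicontinuous T M \<longleftrightarrow>
     (\<forall>tau>0. \<exists>K\<in>sets M. equicontinuous_set T K \<and> measure M K > 1 - tau)"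

end

theory Submission
  imports Defs
begin

lemma funpow_cont:
  assumes "tds X T"
  shows "continuous_on X (T ^^ k) \<and> (T ^^ k) ` X \<subseteq> X"
proof (induction k)
  case 0
  then show ?case by (simp add: continuous_on_id)
next
  case (Suc k)
  have c: "continuous_on X T" and i: "T ` X \<subseteq> X" using assms by (auto simp: tds_def)
  have "continuous_on X (T \<circ> (T ^^ k))"
    using Suc continuous_on_subset[OF c] by (intro continuous_on_compose) auto
  moreover have "(T \<circ> (T ^^ k)) ` X \<subseteq> X" using Suc i by (auto simp: image_subset_iff)
  ultimately show ?case by simp
qed

lemma bowen_lt:
  assumes "e > 0"
  shows "bowen_dist T n x y < e \<longleftrightarrow> (\<forall>i<n. dist ((T ^^ i) x) ((T ^^ i) y) < e)"
proof -
  have eq: "{dist ((T ^^ i) x) ((T ^^ i) y) | i. i < n} = (\<lambda>i. dist ((T ^^ i) x) ((T ^^ i) y)) ` {..<n}"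
    by auto
  have fin: "finite (insert 0 {dist ((T ^^ i) x) ((T ^^ i) y) | i. i < n})"
    unfolding eq by simp
  show ?thesis unfolding bowen_dist_def
    using Max_less_iff[OF fin] assms by auto
qed

lemma ibp_facts:
  assumes "invariant_borel_prob X T M"
  shows "space M = X" "sets M = sets (restrict_space borel X)" "prob_space M"
proof -
  show s: "sets M = sets (restrict_space borel X)" "prob_space M"
    using assms by (auto simp: invariant_borel_prob_def)
  show "space M = X" using sets_eq_imp_space_eq[OF s(1)] by (simp add: space_restrict_space)
qed

lemma meas_nbhd:
  fixes X :: "'a::metric_space set"
  assumes "sets M = sets (restrict_space borel X)" "S \<subseteq> X"
    "\<forall>y\<in>S. \<exists>d>0. \<forall>z\<in>X. dist z y < d \<longrightarrow> z \<in> S"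
  shows "S \<in> sets M"
proof -
  have "openin (top_of_set X) S" using assms(2,3) by (simp add: openin_euclidean_subtopology_iff)
  then obtain U where "open U" "S = X \<inter> U" by (auto simp: openin_open)
  then show ?thesis unfolding assms(1) sets_restrict_space by auto
qed

lemma meas_closed:
  fixes X :: "'a::metric_space set"
  assumes "sets M = sets (restrict_space borel X)" "S \<subseteq> X" "closed S"
  shows "S \<in> sets M"
proof -
  have "S = X \<inter> S" using assms by auto
  then show ?thesis unfolding assms(1) sets_restrict_space using assms(3) by auto
qed

lemma bowen_nbhd:
  assumes "tds X T" "e > 0" "y \<in> bowen_ball X T n x e"
  shows "\<exists>d>0. \<forall>z\<in>X. dist z y < d \<longrightarrow> z \<in> bowen_ball X T n x e"
proof -
  have yX: "y \<in> X" and yb: "\<forall>i<n. dist ((T ^^ i) x) ((T ^^ i) y) < e"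
    using assms(3) bowen_lt[OF assms(2), of T n x y] by (auto simp: bowen_ball_def)
  have "\<forall>i\<in>{..<n}. eventually (\<lambda>z. dist ((T ^^ i) x) ((T ^^ i) z) < e) (at y within X)"
  proof
    fix i assume "i \<in> {..<n}"
    have "((T ^^ i) \<longlongrightarrow> (T ^^ i) y) (at y within X)"
      using funpow_cont[OF assms(1), of i] yX by (simp add: continuous_on_def)
    then have "((\<lambda>z. dist ((T ^^ i) x) ((T ^^ i) z)) \<longlongrightarrow> dist ((T ^^ i) x) ((T ^^ i) y)) (at y within X)"
      by (intro tendsto_intros)
    then show "eventually (\<lambda>z. dist ((T ^^ i) x) ((T ^^ i) z) < e) (at y within X)"
      using yb \<open>i \<in> {..<n}\<close> by (intro order_tendstoD(2)) auto
  qed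
  then have "eventually (\<lambda>z. \<forall>i\<in>{..<n}. dist ((T ^^ i) x) ((T ^^ i) z) < e) (at y within X)"
    by (intro eventually_ball_finite) auto
  then obtain d where d: "d > 0" "\<forall>z\<in>X. z \<noteq> y \<and> dist z y < d \<longrightarrow> (\<forall>i\<in>{..<n}. dist ((T ^^ i) x) ((T ^^ i) z) < e)"
    by (auto simp: eventually_at)
  show ?thesis
  proof (intro exI[of _ d] conjI ballI impI)
    fix z assume "z \<in> X" "dist z y < d"
    then show "z \<in> bowen_ball X T n x e"
      using d yb bowen_lt[OF assms(2), of T n x z] bowen_lt[OF assms(2), of T n x y] by (cases "z = y") (auto simp: bowen_ball_def)
  qed (use d in auto)
qed

lemma bowen_center:
  assumes "e > 0" "x \<in> X"
  shows "x \<in> bowen_ball X T n x e"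
  using assms bowen_lt[OF assms(1), of T n x x] by (simp add: bowen_ball_def)

lemma span_witness:
  assumes "tds X T" "invariant_borel_prob X T M" "e > 0"
  shows "\<exists>F. F \<subseteq> X \<and> finite F \<and> card F = span_mu X T M n e \<and>
           measure M (\<Union>x\<in>F. bowen_ball X T n x e) > 1 - e"
proof -
  note ib = ibp_facts[OF assms(2)]
  have "\<forall>x\<in>X. \<exists>d>0. \<forall>z\<in>X. dist z x < d \<longrightarrow> z \<in> bowen_ball X T n x e"
    using bowen_nbhd[OF assms(1,3)] bowen_center[OF assms(3)] by blast
  then have "\<exists>d. \<forall>x\<in>X. d x > 0 \<and> (\<forall>z\<in>X. dist z x < d x \<longrightarrow> z \<in> bowen_ball X T n x e)"
    by (rule bchoice)
  then obtain d where d: "\<And>x. x \<in> X \<Longrightarrow> d x > 0 \<and> (\<forall>z\<in>X. dist z x < d x \<longrightarrow> z \<in> bowen_ball X T n x e)"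
    by blast
  have cX: "compact X" using assms(1) by (simp add: tds_def)
  have cov: "X \<subseteq> (\<Union>x\<in>X. ball x (d x))" using d by force
  obtain F where F: "F \<subseteq> X" "finite F" "X \<subseteq> (\<Union>x\<in>F. ball x (d x))"
    by (rule compactE_image[of X X "\<lambda>x. ball x (d x)"]) (use cX cov in auto)
  have "(\<Union>x\<in>F. bowen_ball X T n x e) = X"
  proof
    show "(\<Union>x\<in>F. bowen_ball X T n x e) \<subseteq> X" by (auto simp: bowen_ball_def)
    show "X \<subseteq> (\<Union>x\<in>F. bowen_ball X T n x e)"
    proof
      fix z assume "z \<in> X"
      then obtain x where "x \<in> F" "z \<in> ball x (d x)" using F by blast
      have "x \<in> X" using F \<open>x \<in> F\<close> by blast
      then have "z \<in> bowen_ball X T n x e" using d[of x] \<open>z \<in> X\<close> \<open>z \<in> ball x (d x)\<close>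
        by (auto simp: dist_commute)
      then show "z \<in> (\<Union>x\<in>F. bowen_ball X T n x e)" using \<open>x \<in> F\<close> by blast
    qed
  qed
  then have "measure M (\<Union>x\<in>F. bowen_ball X T n x e) = 1"
    using ib prob_space.prob_space[of M] by simp
  then have P: "\<exists>F. F \<subseteq> X \<and> finite F \<and> card F = card F \<and>
           measure M (\<Union>x\<in>F. bowen_ball X T n x e) > 1 - e" using F assms(3) by auto
  show ?thesis unfolding span_mu_def
    by (rule LeastI_ex) (use P in blast)
qed

lemma span_le:
  assumes "F \<subseteq> X" "finite F" "measure M (\<Union>x\<in>F. bowen_ball X T n x e) > 1 - e"
  shows "span_mu X T M n e \<le> card F"
  unfolding span_mu_def
proof (rule Least_le, intro exI[of _ F] conjI)
qed (use assms in auto)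

lemma union_bowen_meas:
  assumes "tds X T" "invariant_borel_prob X T M" "e > 0"
  shows "(\<Union>x\<in>F. bowen_ball X T n x e) \<in> sets M"
proof (rule meas_nbhd[OF ibp_facts(2)[OF assms(2)]])
  show "(\<Union>x\<in>F. bowen_ball X T n x e) \<subseteq> X" by (auto simp: bowen_ball_def)
  show "\<forall>y\<in>(\<Union>x\<in>F. bowen_ball X T n x e). \<exists>d>0. \<forall>z\<in>X. dist z y < d \<longrightarrow> z \<in> (\<Union>x\<in>F. bowen_ball X T n x e)"
  proof
    fix y assume "y \<in> (\<Union>x\<in>F. bowen_ball X T n x e)"
    then obtain x where x: "x \<in> F" "y \<in> bowen_ball X T n x e" by blast
    obtain d where d: "d > 0" "\<forall>z\<in>X. dist z y < d \<longrightarrow> z \<in> bowen_ball X T n x e"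
      using bowen_nbhd[OF assms(1,3) x(2)] by blast
    show "\<exists>d>0. \<forall>z\<in>X. dist z y < d \<longrightarrow> z \<in> (\<Union>x\<in>F. bowen_ball X T n x e)"
      using d x(1) by blast
  qed
qed

lemma equi_imp_bc:
  assumes "tds X T" "invariant_borel_prob X T M" "mu_equicontinuous T M"
  shows "bounded_complexity X T M"
  unfolding bounded_complexity_def
proof (intro allI impI)
  fix e :: real assume e: "e > 0"
  note ib = ibp_facts[OF assms(2)]
  have "\<exists>K\<in>sets M. equicontinuous_set T K \<and> measure M K > 1 - e"
    using assms(3) e unfolding mu_equicontinuous_def by simp
  then obtain K where K: "K \<in> sets M" "equicontinuous_set T K" "measure M K > 1 - e"
    by blast
  have KX: "K \<subseteq> X" using sets.sets_into_space[OF K(1)] ib(1) by simp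
  have "\<exists>d>0. \<forall>n::nat. \<forall>x\<in>K. \<forall>y\<in>K. dist x y < d \<longrightarrow> dist ((T ^^ n) x) ((T ^^ n) y) < e"
    using K(2) e unfolding equicontinuous_set_def by simp
  then obtain d where d1: "d > 0" and d2: "\<forall>n::nat. \<forall>x\<in>K. \<forall>y\<in>K. dist x y < d \<longrightarrow> dist ((T ^^ n) x) ((T ^^ n) y) < e"
    by blast
  have d: "d > 0" "\<And>n x y. x \<in> K \<Longrightarrow> y \<in> K \<Longrightarrow> dist x y < d \<Longrightarrow> dist ((T ^^ n) x) ((T ^^ n) y) < e"
    using d1 d2 by auto
  have cX: "compact X" using assms(1) by (simp add: tds_def)
  have ccl: "compact (closure K)"
  proof -
    have "closure K \<subseteq> X" using KX cX by (simp add: closure_minimal compact_imp_closed)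
    then have "closure K = X \<inter> closure K" by blast
    then show ?thesis using compact_Int_closed[OF cX, of "closure K"] by simp
  qed
  have cov: "closure K \<subseteq> (\<Union>x\<in>K. ball x d)"
  proof
    fix p assume "p \<in> closure K"
    then obtain x where "x \<in> K" "dist x p < d" using d(1) closure_approachable[of p K] by blast
    then show "p \<in> (\<Union>x\<in>K. ball x d)" by auto
  qed
  obtain F where F: "F \<subseteq> K" "finite F" "closure K \<subseteq> (\<Union>x\<in>F. ball x d)"
    by (rule compactE_image[of "closure K" K "\<lambda>x. ball x d"]) (use ccl cov in auto)
  have sub: "K \<subseteq> (\<Union>x\<in>F. bowen_ball X T n x e)" for n
  proof
    fix y assume "y \<in> K"
    then have "y \<in> (\<Union>x\<in>F. ball x d)" using F(3) closure_subset by blast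
    then obtain x where x: "x \<in> F" "dist x y < d" by auto
    have xK: "x \<in> K" using x F by blast
    have "\<forall>i<n. dist ((T ^^ i) x) ((T ^^ i) y) < e" using d(2)[OF xK \<open>y \<in> K\<close> x(2)] by simp
    then have "y \<in> bowen_ball X T n x e" using bowen_lt[OF e, of T n x y] \<open>y \<in> K\<close> KX
      by (auto simp: bowen_ball_def)
    then show "y \<in> (\<Union>x\<in>F. bowen_ball X T n x e)" using x by blast
  qed
  have "span_mu X T M n e \<le> card F" for n
  proof (rule span_le)
    show "F \<subseteq> X" "finite F" using F KX by auto
    interpret prob_space M by (rule ib(3))
    have "measure M K \<le> measure M (\<Union>x\<in>F. bowen_ball X T n x e)"
      by (rule finite_measure_mono[OF sub union_bowen_meas[OF assms(1,2) e]])
    then show "measure M (\<Union>x\<in>F. bowen_ball X T n x e) > 1 - e" using K(3) by linarith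
  qed
  then show "\<exists>C::nat. C > 0 \<and> (\<forall>n\<ge>1. span_mu X T M n e \<le> C)"
  proof (intro exI[of _ "max 1 (card F)"] conjI allI impI)
    fix n :: nat
    show "span_mu X T M n e \<le> max 1 (card F)" using \<open>span_mu X T M n e \<le> card F\<close> by linarith
  qed simp
qed

lemma multi_subseq:
  fixes C :: nat and xs :: "nat \<Rightarrow> nat \<Rightarrow> 'a::metric_space"
  assumes "compact X" "\<forall>n i. i < C \<longrightarrow> xs n i \<in> X"
  shows "\<exists>r l. strict_mono r \<and> (\<forall>i<C. l i \<in> X \<and> (\<lambda>n. xs (r n) i) \<longlonglongrightarrow> l i)"
  using assms(2)
proof (induction C)
  case 0
  have "strict_mono (id::nat\<Rightarrow>nat) \<and> (\<forall>i<(0::nat). (\<lambda>_. undefined) i \<in> X \<and> (\<lambda>n. xs (id n) i) \<longlonglongrightarrow> (\<lambda>_. undefined) i)"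
    by (simp add: strict_mono_def)
  then show ?case by blast
next
  case (Suc C)
  then obtain r l where rl: "strict_mono r" "\<forall>i<C. l i \<in> X \<and> (\<lambda>n. xs (r n) i) \<longlonglongrightarrow> l i"
    by auto
  have "\<forall>n. xs (r n) C \<in> X" using Suc.prems by auto
  then obtain l' s where s: "l' \<in> X" "strict_mono s" "((\<lambda>n. xs (r n) C) \<circ> s) \<longlonglongrightarrow> l'"
    by (rule seq_compactE[OF compact_imp_seq_compact[OF assms(1)]])
  show ?case
  proof (intro exI[of _ "r \<circ> s"] exI[of _ "l(C := l')"] conjI allI impI)
    show "strict_mono (r \<circ> s)" using rl(1) s(2) by (rule strict_mono_o)
    fix i assume i: "i < Suc C"
    show "(l(C := l')) i \<in> X" using i rl s by (cases "i = C") auto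
    show "(\<lambda>n. xs ((r \<circ> s) n) i) \<longlonglongrightarrow> (l(C := l')) i"
    proof (cases "i = C")
      case True then show ?thesis using s(3) by (simp add: comp_def)
    next
      case False
      then have "(\<lambda>n. xs (r n) i) \<longlonglongrightarrow> l i" using rl i by auto
      from LIMSEQ_subseq_LIMSEQ[OF this s(2)] show ?thesis using False by (simp add: comp_def)
    qed
  qed
qed

lemma closed_bset:
  assumes "tds X T"
  shows "closed {y\<in>X. \<forall>k\<in>I. dist ((T ^^ k) y) ((T ^^ k) c) \<le> r}"
proof -
  have cX: "closed X" using assms by (simp add: tds_def compact_imp_closed)
  have each: "closed {y\<in>X. dist ((T ^^ k) y) ((T ^^ k) c) \<le> r}" for k
    by (rule continuous_on_closed_Collect_le[OF _ _ cX])
       (intro continuous_intros continuous_on_dist funpow_cont[OF assms, THEN conjunct1])+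
  have "{y\<in>X. \<forall>k\<in>I. dist ((T ^^ k) y) ((T ^^ k) c) \<le> r} =
        X \<inter> (\<Inter>k\<in>I. {y\<in>X. dist ((T ^^ k) y) ((T ^^ k) c) \<le> r})" by auto
  then show ?thesis using cX each by (auto intro!: closed_INT)
qed

lemma compact_sep:
  fixes A B :: "'a::metric_space set"
  assumes "compact A" "compact B" "A \<inter> B = {}"
  shows "\<exists>d>0. \<forall>x\<in>A. \<forall>y\<in>B. d \<le> dist x y"
proof (cases "A = {} \<or> B = {}")
  case True then show ?thesis by (intro exI[of _ 1]) auto
next
  case False
  then have ne: "A \<times> B \<noteq> {}" by auto
  have "continuous_on (A \<times> B) (\<lambda>p. dist (fst p) (snd p))"
    by (intro continuous_intros)
  from continuous_attains_inf[OF compact_Times[OF assms(1,2)] ne this]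
  obtain p where p: "p \<in> A \<times> B" "\<forall>q\<in>A \<times> B. dist (fst p) (snd p) \<le> dist (fst q) (snd q)" by blast
  have "dist (fst p) (snd p) > 0" using p(1) assms(3) by auto
  then show ?thesis using p(2) by (intro exI[of _ "dist (fst p) (snd p)"]) auto
qed

lemma pieces_equi:
  fixes Q :: "'i \<Rightarrow> 'a::metric_space set"
  assumes "finite I" "\<forall>i\<in>I. compact (Q i)"
    "\<forall>i\<in>I. \<forall>y\<in>Q i. \<forall>z\<in>Q i. \<forall>n. dist (f n y) (f n z) \<le> r"
  shows "\<exists>\<delta>>0. \<forall>y\<in>(\<Union>i\<in>I. Q i). \<forall>z\<in>(\<Union>i\<in>I. Q i). dist y z < \<delta> \<longrightarrow> (\<forall>n. dist (f n y) (f n z) \<le> 2*r)"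
proof -
  define P where "P = {p\<in>I\<times>I. Q (fst p) \<inter> Q (snd p) = {}}"
  have finP: "finite P" using assms(1) unfolding P_def by (auto intro: finite_subset[of _ "I \<times> I"])
  have "\<forall>p\<in>P. \<exists>d>0. \<forall>x\<in>Q (fst p). \<forall>y\<in>Q (snd p). d \<le> dist x y"
    using compact_sep assms(2) unfolding P_def by auto
  then have "\<exists>dd. \<forall>p\<in>P. dd p > 0 \<and> (\<forall>x\<in>Q (fst p). \<forall>y\<in>Q (snd p). dd p \<le> dist x y)"
    by (rule bchoice)
  then obtain dd where dd: "\<And>p. p \<in> P \<Longrightarrow> dd p > 0 \<and> (\<forall>x\<in>Q (fst p). \<forall>y\<in>Q (snd p). dd p \<le> dist x y)"
    by blast
  define \<delta> where "\<delta> = Min (insert 1 (dd ` P))"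
  have fin2: "finite (insert 1 (dd ` P))" using finP by simp
  have dpos: "\<delta> > 0" unfolding \<delta>_def using Min_gr_iff[OF fin2] dd by auto
  have dle: "\<delta> \<le> dd p" if "p \<in> P" for p unfolding \<delta>_def using Min_le[OF fin2] that by auto
  show ?thesis
  proof (intro exI[of _ \<delta>] conjI ballI impI allI)
    show "\<delta> > 0" by (rule dpos)
    fix y z n assume y: "y \<in> (\<Union>i\<in>I. Q i)" and z: "z \<in> (\<Union>i\<in>I. Q i)" and yz: "dist y z < \<delta>"
    obtain i j where ij: "i \<in> I" "j \<in> I" "y \<in> Q i" "z \<in> Q j" using y z by auto
    show "dist (f n y) (f n z) \<le> 2 * r"
    proof (cases "(i, j) \<in> P")
      case True
      then have "dd (i,j) \<le> dist y z" using dd[OF True] ij by auto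
      then show ?thesis using dle[OF True] yz by linarith
    next
      case False
      then obtain w where w: "w \<in> Q i" "w \<in> Q j" using ij unfolding P_def by auto
      have "dist (f n y) (f n z) \<le> dist (f n y) (f n w) + dist (f n w) (f n z)" by (rule dist_triangle)
      also have "\<dots> \<le> r + r" using assms(3) ij w by (intro add_mono) blast+
      finally show ?thesis by simp
    qed
  qed
qed

lemma enum_finite:
  assumes "finite F" "F \<noteq> {}" "card F \<le> C"
  shows "\<exists>f. f ` {..<C} = F"
proof -
  obtain g where g: "bij_betw g {0..<card F} F" using ex_bij_betw_nat_finite[OF assms(1)] by blast
  have cp: "card F > 0" using assms(1,2) by auto
  define f where "f i = (if i < card F then g i else g 0)" for i
  have "f ` {..<C} = F"
  proof
    show "f ` {..<C} \<subseteq> F"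
    proof
      fix y assume "y \<in> f ` {..<C}"
      then obtain i where y: "y = f i" by blast
      have g0: "g 0 \<in> F" using bij_betw_apply[OF g, of 0] cp by simp
      show "y \<in> F"
      proof (cases "i < card F")
        case True then show ?thesis using bij_betw_apply[OF g, of i] y unfolding f_def by simp
      next
        case False then show ?thesis using g0 y unfolding f_def by simp
      qed
    qed
    show "F \<subseteq> f ` {..<C}"
    proof
      fix x assume "x \<in> F"
      then have "x \<in> g ` {0..<card F}" using g unfolding bij_betw_def by simp
      then obtain i where i: "i < card F" "g i = x" by auto
      then have "f i = x" "i \<in> {..<C}" using assms(3) unfolding f_def by auto
      then show "x \<in> f ` {..<C}" by (metis imageI)
    qed
  qed
  then show ?thesis by blast
qed

lemma step_cover:
  assumes "tds X T" "invariant_borel_prob X T M" "0 < e" "e < 1" "span_mu X T M n e \<le> C"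
  shows "\<exists>f. (\<forall>i<C. f i \<in> X) \<and> measure M (\<Union>i<C. bowen_ball X T n (f i) e) > 1 - e"
proof -
  obtain F where F: "F \<subseteq> X" "finite F" "card F = span_mu X T M n e"
      "measure M (\<Union>x\<in>F. bowen_ball X T n x e) > 1 - e"
    using span_witness[OF assms(1,2,3), of n] by (elim exE conjE) (rule that)
  have "F \<noteq> {}"
  proof
    assume "F = {}"
    then have "measure M (\<Union>x\<in>F. bowen_ball X T n x e) = 0" by simp
    with F(4) assms(4) show False by linarith
  qed
  moreover have "card F \<le> C" using F(3) assms(5) by simp
  ultimately obtain f where f: "f ` {..<C} = F" using enum_finite[OF F(2)] by blast
  have eq: "(\<Union>i<C. bowen_ball X T n (f i) e) = (\<Union>x\<in>F. bowen_ball X T n x e)"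
    unfolding f[symmetric] by (simp add: image_image)
  have "\<forall>i<C. f i \<in> X"
  proof (intro allI impI)
    fix i assume "i < C"
    then have "f i \<in> f ` {..<C}" by simp
    then show "f i \<in> X" using F(1) unfolding f by blast
  qed
  then show ?thesis using F(4) unfolding eq[symmetric] by blast
qed

definition Qs :: "'a set \<Rightarrow> ('a::metric_space \<Rightarrow> 'a) \<Rightarrow> 'a \<Rightarrow> real \<Rightarrow> 'a set" where
  "Qs X T c r = {y\<in>X. \<forall>k\<in>UNIV. dist ((T ^^ k) y) ((T ^^ k) c) \<le> r}"

lemma pieces:
  assumes tds: "tds X T" and ibp: "invariant_borel_prob X T M" and e: "0 < e" "e < 1"
    and bc: "\<forall>n\<ge>1. span_mu X T M n e \<le> C"
  shows "\<exists>l. (\<forall>i<C. l i \<in> X) \<and> measure M (\<Union>i<C. Qs X T (l i) (2*e)) \<ge> 1 - e"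
proof -
  note ib = ibp_facts[OF ibp]
  interpret prob_space M by (rule ib(3))
  have cX: "compact X" using tds by (simp add: tds_def)
  have "\<forall>n. \<exists>f. (\<forall>i<C. f i \<in> X) \<and> measure M (\<Union>i<C. bowen_ball X T (Suc n) (f i) e) > 1 - e"
    using step_cover[OF tds ibp e] bc by auto
  then have "\<exists>xs. \<forall>n. (\<forall>i<C. xs n i \<in> X) \<and> measure M (\<Union>i<C. bowen_ball X T (Suc n) (xs n i) e) > 1 - e"
    by (rule choice)
  then obtain xs where xs: "\<And>n. (\<forall>i<C. xs n i \<in> X) \<and> measure M (\<Union>i<C. bowen_ball X T (Suc n) (xs n i) e) > 1 - e"
    by blast
  obtain r l where rl: "strict_mono r" "\<forall>i<C. l i \<in> X \<and> (\<lambda>n. xs (r n) i) \<longlonglongrightarrow> l i"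
    using multi_subseq[OF cX, of C xs] xs by blast
  define U where "U m = (\<Union>i<C. {y\<in>X. \<forall>k\<in>{..<m}. dist ((T ^^ k) y) ((T ^^ k) (l i)) \<le> 2*e})" for m
  have Umeas: "U m \<in> sets M" for m
    unfolding U_def by (rule meas_closed[OF ib(2)]) (auto intro!: closed_UN closed_bset[OF tds])
  have Ubig: "measure M (U m) > 1 - e" for m
  proof -
    have "\<forall>i\<in>{..<C}. \<forall>k\<in>{..<m}. eventually (\<lambda>n. dist ((T ^^ k) (xs (r n) i)) ((T ^^ k) (l i)) < e) sequentially"
    proof (intro ballI)
      fix i k assume i: "i \<in> {..<C}" and k: "k \<in> {..<m}"
      have t1: "(\<lambda>n. xs (r n) i) \<longlonglongrightarrow> l i" and li: "l i \<in> X" using rl i by auto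
      have ev: "eventually (\<lambda>n. xs (r n) i \<in> X) sequentially"
        using xs i by (intro always_eventually) blast
      have "(\<lambda>n. (T ^^ k) (xs (r n) i)) \<longlonglongrightarrow> (T ^^ k) (l i)"
        by (rule continuous_on_tendsto_compose[OF funpow_cont[OF tds, THEN conjunct1] t1 li ev])
      then have "(\<lambda>n. dist ((T ^^ k) (xs (r n) i)) ((T ^^ k) (l i))) \<longlonglongrightarrow> 0"
        by (rule tendsto_dist_iff[THEN iffD1])
      then show "eventually (\<lambda>n. dist ((T ^^ k) (xs (r n) i)) ((T ^^ k) (l i)) < e) sequentially"
        using e by (intro order_tendstoD(2)) auto
    qed
    then have "eventually (\<lambda>n. \<forall>i\<in>{..<C}. \<forall>k\<in>{..<m}. dist ((T ^^ k) (xs (r n) i)) ((T ^^ k) (l i)) < e) sequentially"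
      by (intro eventually_ball_finite ballI) auto
    moreover have "eventually (\<lambda>n. n \<ge> m) sequentially" by (rule eventually_ge_at_top)
    ultimately have "eventually (\<lambda>n. n \<ge> m \<and> (\<forall>i\<in>{..<C}. \<forall>k\<in>{..<m}. dist ((T ^^ k) (xs (r n) i)) ((T ^^ k) (l i)) < e)) sequentially"
      by eventually_elim auto
    then obtain n where n: "n \<ge> m" "\<forall>i\<in>{..<C}. \<forall>k\<in>{..<m}. dist ((T ^^ k) (xs (r n) i)) ((T ^^ k) (l i)) < e"
      by (auto simp: eventually_sequentially)
    have rn: "r n \<ge> m" using n(1) seq_suble[OF rl(1), of n] by linarith
    have sub: "(\<Union>i<C. bowen_ball X T (Suc (r n)) (xs (r n) i) e) \<subseteq> U m"
    proof
      fix y assume "y \<in> (\<Union>i<C. bowen_ball X T (Suc (r n)) (xs (r n) i) e)"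
      then obtain i where i: "i < C" "y \<in> X" "bowen_dist T (Suc (r n)) (xs (r n) i) y < e"
        by (auto simp: bowen_ball_def)
      have b: "\<forall>j<Suc (r n). dist ((T ^^ j) (xs (r n) i)) ((T ^^ j) y) < e"
        using i(3) bowen_lt[OF e(1), of T "Suc (r n)" "xs (r n) i" y] by blast
      have "\<forall>k\<in>{..<m}. dist ((T ^^ k) y) ((T ^^ k) (l i)) \<le> 2*e"
      proof
        fix k assume k: "k \<in> {..<m}"
        have "dist ((T ^^ k) y) ((T ^^ k) (l i)) \<le> dist ((T ^^ k) (xs (r n) i)) ((T ^^ k) y) + dist ((T ^^ k) (xs (r n) i)) ((T ^^ k) (l i))"
          by (rule dist_triangle3)
        also have "\<dots> \<le> e + e" using b n(2) k rn i(1) by (intro add_mono less_imp_le) auto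
        finally show "dist ((T ^^ k) y) ((T ^^ k) (l i)) \<le> 2*e" by simp
      qed
      then show "y \<in> U m" unfolding U_def using i by auto
    qed
    have "measure M (\<Union>i<C. bowen_ball X T (Suc (r n)) (xs (r n) i) e) \<le> measure M (U m)"
      by (rule finite_measure_mono[OF sub Umeas])
    then show ?thesis using xs[of "r n"] by linarith
  qed
  have dec: "decseq U" unfolding decseq_def U_def by auto
  have lim: "(\<lambda>m. measure M (U m)) \<longlonglongrightarrow> measure M (\<Inter>m. U m)"
    using Umeas dec by (intro finite_Lim_measure_decseq) auto
  have ge: "measure M (\<Inter>m. U m) \<ge> 1 - e"
    by (rule LIMSEQ_le_const[OF lim]) (use Ubig less_imp_le in blast)
  have inter_sub: "(\<Inter>m. U m) \<subseteq> (\<Union>i<C. Qs X T (l i) (2*e))"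
  proof
    fix y assume y: "y \<in> (\<Inter>m. U m)"
    show "y \<in> (\<Union>i<C. Qs X T (l i) (2*e))"
    proof (rule ccontr)
      assume "y \<notin> (\<Union>i<C. Qs X T (l i) (2*e))"
      moreover have yX: "y \<in> X" using y unfolding U_def by auto
      ultimately have "\<forall>i\<in>{..<C}. \<exists>k. dist ((T ^^ k) y) ((T ^^ k) (l i)) > 2*e"
        unfolding Qs_def by (auto simp: not_le)
      then have "\<exists>kk. \<forall>i\<in>{..<C}. dist ((T ^^ kk i) y) ((T ^^ kk i) (l i)) > 2*e"
        by (rule bchoice)
      then obtain kk where kk: "\<And>i. i \<in> {..<C} \<Longrightarrow> dist ((T ^^ kk i) y) ((T ^^ kk i) (l i)) > 2*e"
        by blast
      define m where "m = Suc (Max (insert 0 (kk ` {..<C})))"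
      have km: "kk i < m" if "i < C" for i
        unfolding m_def using that by (simp add: le_imp_less_Suc)
      from y have "y \<in> U m" by blast
      then obtain i where i: "i < C" "\<forall>k\<in>{..<m}. dist ((T ^^ k) y) ((T ^^ k) (l i)) \<le> 2*e"
        unfolding U_def by auto
      have "kk i \<in> {..<m}" using km[OF i(1)] by simp
      then have "dist ((T ^^ kk i) y) ((T ^^ kk i) (l i)) \<le> 2*e" using i(2) by blast
      moreover have "dist ((T ^^ kk i) y) ((T ^^ kk i) (l i)) > 2*e" using kk[of i] i(1) by simp
      ultimately show False by linarith
    qed
  qed
  have Qmeas: "(\<Union>i<C. Qs X T (l i) (2*e)) \<in> sets M"
    unfolding Qs_def by (rule meas_closed[OF ib(2)]) (auto intro!: closed_UN closed_bset[OF tds, of UNIV, simplified])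
  have "measure M (\<Inter>m. U m) \<le> measure M (\<Union>i<C. Qs X T (l i) (2*e))"
    by (rule finite_measure_mono[OF inter_sub Qmeas])
  then have "measure M (\<Union>i<C. Qs X T (l i) (2*e)) \<ge> 1 - e" using ge by linarith
  moreover have "\<forall>i<C. l i \<in> X" using rl(2) by blast
  ultimately show ?thesis by blast
qed

lemma Qs_closed: "tds X T \<Longrightarrow> closed (Qs X T c r)"
  unfolding Qs_def using closed_bset[of X T UNIV c r] by simp

lemma Qs_sub: "Qs X T c r \<subseteq> X" unfolding Qs_def by auto

lemma Qs_diam:
  assumes "y \<in> Qs X T c r" "z \<in> Qs X T c r"
  shows "dist ((T ^^ n) y) ((T ^^ n) z) \<le> 2 * r"
proof -
  have "dist ((T ^^ n) y) ((T ^^ n) z) \<le> dist ((T ^^ n) y) ((T ^^ n) c) + dist ((T ^^ n) z) ((T ^^ n) c)"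
    by (rule dist_triangle2)
  also have "\<dots> \<le> r + r" using assms unfolding Qs_def by (intro add_mono) auto
  finally show ?thesis by simp
qed

lemma bc_imp_equi:
  fixes X :: "'a::metric_space set"
  assumes tds: "tds X T" and ibp: "invariant_borel_prob X T M" and bc: "bounded_complexity X T M"
  shows "mu_equicontinuous T M"
  unfolding mu_equicontinuous_def
proof (intro allI impI)
  fix tau :: real assume tau: "tau > 0"
  note ib = ibp_facts[OF ibp]
  interpret prob_space M by (rule ib(3))
  have cX: "compact X" using tds by (simp add: tds_def)
  define t where "t = min tau 1"
  have t: "0 < t" "t \<le> 1" "t \<le> tau" using tau unfolding t_def by auto
  define ee where "ee k = t / 4 * (1/2) ^ k" for k :: nat
  have ee: "0 < ee k" "ee k < 1" for k
  proof -
    show "0 < ee k" using t unfolding ee_def by simp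
    have "(1/2::real) ^ k \<le> 1" by (rule power_le_one) auto
    then have "t / 4 * (1/2) ^ k \<le> t / 4 * 1" using t by (intro mult_left_mono) auto
    then show "ee k < 1" using t unfolding ee_def by linarith
  qed
  have "\<forall>k. \<exists>p::nat \<times> (nat \<Rightarrow> 'a). measure M (\<Union>i<fst p. Qs X T (snd p i) (2 * ee k)) \<ge> 1 - ee k"
  proof
    fix k
    obtain C :: nat where C: "C > 0" "\<forall>n\<ge>1. span_mu X T M n (ee k) \<le> C"
      using bc ee(1)[of k] unfolding bounded_complexity_def by blast
    obtain l where "measure M (\<Union>i<C. Qs X T (l i) (2 * ee k)) \<ge> 1 - ee k"
      using pieces[OF tds ibp ee(1) ee(2) C(2)] by blast
    then have "measure M (\<Union>i<fst (C, l). Qs X T (snd (C, l) i) (2 * ee k)) \<ge> 1 - ee k" by simp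
    then show "\<exists>p::nat \<times> (nat \<Rightarrow> 'a). measure M (\<Union>i<fst p. Qs X T (snd p i) (2 * ee k)) \<ge> 1 - ee k"
      by (rule exI[of _ "(C, l)"])
  qed
  then obtain pp :: "nat \<Rightarrow> nat \<times> (nat \<Rightarrow> 'a)" where pp: "\<forall>k. measure M (\<Union>i<fst (pp k). Qs X T (snd (pp k) i) (2 * ee k)) \<ge> 1 - ee k"
    using choice[OF \<open>\<forall>k. \<exists>p. _\<close>] by blast
  define CC where "CC k = fst (pp k)" for k
  define LL where "LL k = snd (pp k)" for k
  have CL: "measure M (\<Union>i<CC k. Qs X T (LL k i) (2 * ee k)) \<ge> 1 - ee k" for k
    using pp unfolding CC_def LL_def by blast
  define KK where "KK k = (\<Union>i<CC k. Qs X T (LL k i) (2 * ee k))" for k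
  define K where "K = (\<Inter>k. KK k)"
  have KKcl: "closed (KK k)" for k unfolding KK_def using Qs_closed[OF tds] by (intro closed_UN) auto
  have KKX: "KK k \<subseteq> X" for k unfolding KK_def using Qs_sub by blast
  have KKm: "KK k \<in> sets M" for k by (rule meas_closed[OF ib(2) KKX KKcl])
  have KX: "K \<subseteq> X" unfolding K_def using KKX by blast
  have Kcl: "closed K" unfolding K_def using KKcl by (intro closed_INT) auto
  have Km: "K \<in> sets M" by (rule meas_closed[OF ib(2) KX Kcl])
  have equi: "equicontinuous_set T K"
    unfolding equicontinuous_set_def
  proof (intro allI impI)
    fix \<epsilon> :: real assume eps: "\<epsilon> > 0"
    obtain k where k: "(1/2::real) ^ k < \<epsilon> / (2 * t)"
      using real_arch_pow_inv[of "\<epsilon> / (2 * t)" "1/2"] eps t by auto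
    have small: "8 * ee k < \<epsilon>"
    proof -
      have "8 * ee k = 2 * t * (1/2) ^ k" unfolding ee_def by simp
      also have "\<dots> < 2 * t * (\<epsilon> / (2 * t))" using k t by (intro mult_strict_left_mono) auto
      also have "\<dots> = \<epsilon>" using t by simp
      finally show ?thesis .
    qed
    have "\<exists>\<delta>>0. \<forall>y\<in>(\<Union>i\<in>{..<CC k}. Qs X T (LL k i) (2 * ee k)). \<forall>z\<in>(\<Union>i\<in>{..<CC k}. Qs X T (LL k i) (2 * ee k)).
            dist y z < \<delta> \<longrightarrow> (\<forall>n. dist ((T ^^ n) y) ((T ^^ n) z) \<le> 2 * (2 * (2 * ee k)))"
    proof (rule pieces_equi)
      show "finite {..<CC k}" by simp
      show "\<forall>i\<in>{..<CC k}. compact (Qs X T (LL k i) (2 * ee k))"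
      proof
        fix i
        have eq: "X \<inter> Qs X T (LL k i) (2 * ee k) = Qs X T (LL k i) (2 * ee k)" using Qs_sub by blast
        have "compact (X \<inter> Qs X T (LL k i) (2 * ee k))"
          by (rule compact_Int_closed[OF cX Qs_closed[OF tds]])
        then show "compact (Qs X T (LL k i) (2 * ee k))" by (simp only: eq)
      qed
      show "\<forall>i\<in>{..<CC k}. \<forall>y\<in>Qs X T (LL k i) (2 * ee k). \<forall>z\<in>Qs X T (LL k i) (2 * ee k).
              \<forall>n. dist ((T ^^ n) y) ((T ^^ n) z) \<le> 2 * (2 * ee k)"
        using Qs_diam by blast
    qed
    then obtain \<delta> where d: "\<delta> > 0" "\<forall>y\<in>KK k. \<forall>z\<in>KK k. dist y z < \<delta> \<longrightarrow> (\<forall>n. dist ((T ^^ n) y) ((T ^^ n) z) \<le> 8 * ee k)"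
      unfolding KK_def by auto
    show "\<exists>d>0. \<forall>n. \<forall>x\<in>K. \<forall>y\<in>K. dist x y < d \<longrightarrow> dist ((T ^^ n) x) ((T ^^ n) y) < \<epsilon>"
    proof (intro exI[of _ \<delta>] conjI allI ballI impI)
      show "\<delta> > 0" by (rule d(1))
      fix n x y assume "x \<in> K" "y \<in> K" "dist x y < \<delta>"
      then have "x \<in> KK k" "y \<in> KK k" unfolding K_def by auto
      then have "dist ((T ^^ n) x) ((T ^^ n) y) \<le> 8 * ee k" using d(2) \<open>dist x y < \<delta>\<close> by blast
      then show "dist ((T ^^ n) x) ((T ^^ n) y) < \<epsilon>" using small by linarith
    qed
  qed
  have compl: "measure M (X - KK k) \<le> ee k" for k
  proof -
    have "measure M (X - KK k) = 1 - measure M (KK k)" using prob_compl[OF KKm[of k]] ib(1) by simp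
    then show ?thesis using CL[of k] unfolding KK_def by linarith
  qed
  have sumee: "summable ee" "(\<Sum>k. ee k) = t / 2"
  proof -
    have g: "summable (\<lambda>k. (1/2::real) ^ k)" by (rule summable_geometric) simp
    show "summable ee" unfolding ee_def by (intro summable_mult g)
    have "(\<Sum>k. ee k) = t / 4 * (\<Sum>k. (1/2::real) ^ k)" unfolding ee_def by (rule suminf_mult[OF g])
    also have "(\<Sum>k. (1/2::real) ^ k) = 2" using suminf_geometric[of "1/2::real"] by simp
    finally show "(\<Sum>k. ee k) = t / 2" by simp
  qed
  have summ: "summable (\<lambda>k. measure M (X - KK k))"
    by (rule summable_comparison_test[OF _ sumee(1)]) (use compl in auto)
  have "X - K = (\<Union>k. X - KK k)" unfolding K_def by auto
  moreover have "range (\<lambda>k. X - KK k) \<subseteq> sets M"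
  proof
    fix A assume "A \<in> range (\<lambda>k. X - KK k)"
    then obtain k where "A = X - KK k" by blast
    then show "A \<in> sets M" using sets.Diff[OF sets.top KKm[of k]] ib(1) by simp
  qed
  ultimately have "measure M (X - K) \<le> (\<Sum>k. measure M (X - KK k))"
    using finite_measure_subadditive_countably[of "\<lambda>k. X - KK k", OF _ summ] by simp
  also have "\<dots> \<le> (\<Sum>k. ee k)" by (rule suminf_le[OF compl summ sumee(1)])
  finally have "measure M (X - K) \<le> t / 2" using sumee(2) by simp
  moreover have "measure M (X - K) = 1 - measure M K" using prob_compl[OF Km] ib(1) by simp
  ultimately have "measure M K > 1 - tau" using t by linarith
  then show "\<exists>K\<in>sets M. equicontinuous_set T K \<and> measure M K > 1 - tau"
    using Km equi by blast
qed

theorem mainTheorem7: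
  fixes X :: "'a::metric_space set" and T :: "'a \<Rightarrow> 'a" and M :: "'a measure"
  assumes "tds X T"
    and "invariant_borel_prob X T M"
  shows "bounded_complexity X T M \<longleftrightarrow> mu_equicontinuous T M"
  using bc_imp_equi[OF assms] equi_imp_bc[OF assms] by blast

end
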